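(* Assume that for each $l\in PC$ the map $h_l(\rho)=\sigma_l\rho\sigma_l^*/\operatorname{tr}(\sigma_l\rho\sigma_l^* )$ is a polynomial of degree at most one. Then the infinitesimal generator $\mathcal{A}$ maps polynomials to polynomials: if $w(t,\rho)$ is a polynomial (in $t$ and the real and imaginary parts of the entries of $\rho$), then $\mathcal{A}w(t,\rho,u)$ is a polynomial in $(t,\rho,u)$.
   Context: Fix integers $n\ge 1$, $K\ge 1$, $L\ge 0$. Let $H_0,\dots,H_K\in\mathbb{C}^{n\times n}$ be Hermitian and for $u\in\mathbb{R}^K$ set $H(u)=H_0+\sum_{k=1}^K u_kH_k$. Let $\sigma_1,\dots,\sigma_L\in\mathbb{C}^{n\times n}$ and partition $\{1,\dots,L\}=HD\sqcup PC$. $A^*$ is the conjugate transpose, $[A,C]=AC-CA$, $\{A,C\}=AC+CA$. Define $\mathcal{L}(u)\rho=-i[H(u),\rho]+\sum_{l=1}^L\big(\sigma_l\rho\sigma_l^*-\tfrac12\{\sigma_l^*\sigma_l,\rho\}\big)$; for $l\in HD$: $\mathcal{G}_l\rho=\sigma_l\rho+\rho\sigma_l^*-\operatorname{tr}(\sigma_l\rho+\rho\sigma_l^* )\rho$; for $l\in PC$: $\lambda_l(\rho)=\operatorname{tr}(\sigma_l\rho\sigma_l^* )$, $h_l(\rho)=\sigma_l\rho\sigma_l^*/\lambda_l(\rho)$, $\mathcal{L}_l\rho=\sigma_l\rho\sigma_l^*-\lambda_l(\rho)\rho$; and $\tilde{\mathcal{L}}(u)=\mathcal{L}(u)-\sum_{l\in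 PC}\mathcal{L}_l$. The infinitesimal generator of the quantum filtering equation $d\rho_t=\mathcal{L}(u_t)\rho_t\,dt+\sum_{l\in HD}\mathcal{G}_l\rho_t\,dw^l_t+\sum_{l\in PC}[(h_l(\rho_t)-\rho_t)dn^l_t-\mathcal{L}_l\rho_t\,dt]$ acts on smooth $w(t,\rho)$ by $\mathcal{A}w(t,\rho,u)=\frac{\partial w}{\partial t}(t,\rho)+\langle\tilde{\mathcal{L}}(u)\rho,\nabla_\rho w(t,\rho)\rangle+\frac12\sum_{l\in HD}\langle\mathcal{G}_l\rho,\nabla^2_\rho w(t,\rho)\,\mathcal{G}_l\rho\rangle+\sum_{l\in PC}\lambda_l(\rho)\big(w(t,h_l(\rho))-w(t,\rho)\big)$, where $\langle\cdot,\cdot\rangle$ is the real inner product on Hermitian matrices with respect to which $\nabla_\rho$ and $\nabla^2_\rho$ are taken. A polynomial in $\rho$ means a real-coefficient polynomial jointly in the entries of $\operatorname{Re}\rho$ and $\operatorname{Im}\rho$; matrix-valued maps are polynomial if all components are. *)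

theory Defs
  imports "HOL-Analysis.Analysis"
begin

type_synonym 'n cmat = "complex^'n^'n"

definition madj :: "('n::finite) cmat \<Rightarrow> 'n cmat" where
  "madj A = (\<chi> i j. cnj (A$j$i))"

definition hermitian :: "('n::finite) cmat \<Rightarrow> bool" where
  "hermitian A \<longleftrightarrow> madj A = A"

definition mtr :: "('n::finite) cmat \<Rightarrow> complex" where
  "mtr A = (\<Sum>i\<in>UNIV. A$i$i)"

definition cscale :: "complex \<Rightarrow> ('n::finite) cmat \<Rightarrow> 'n cmat" where
  "cscale c A = (\<chi> i j. c * A$i$j)"

definition mcomm :: "('n::finite) cmat \<Rightarrow> 'n cmat \<Rightarrow> 'n cmat" where
  "mcomm A C = A ** C - C ** A"

definition macomm :: "('n::finite) cmat \<Rightarrow> 'n cmat \<Rightarrow> 'n cmat" where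
  "macomm A C = A ** C + C ** A"

definition Ham :: "('n::finite) cmat \<Rightarrow> ('k::finite \<Rightarrow> 'n cmat) \<Rightarrow> real^'k \<Rightarrow> 'n cmat" where
  "Ham H0 Hk u = H0 + (\<Sum>k\<in>UNIV. (u$k) *\<^sub>R Hk k)"

definition Lind :: "('n::finite) cmat \<Rightarrow> ('k::finite \<Rightarrow> 'n cmat) \<Rightarrow> (nat \<Rightarrow> 'n cmat) \<Rightarrow> nat
    \<Rightarrow> real^'k \<Rightarrow> 'n cmat \<Rightarrow> 'n cmat" where
  "Lind H0 Hk \<sigma> L u \<rho> = cscale (- \<i>) (mcomm (Ham H0 Hk u) \<rho>)
     + (\<Sum>l\<in>{1..L}. \<sigma> l ** \<rho> ** madj (\<sigma> l) - (1/2) *\<^sub>R macomm (madj (\<sigma> l) ** \<sigma> l) \<rho>)"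

definition Gdiff :: "('n::finite) cmat \<Rightarrow> 'n cmat \<Rightarrow> 'n cmat" where
  "Gdiff s \<rho> = s ** \<rho> + \<rho> ** madj s - cscale (mtr (s ** \<rho> + \<rho> ** madj s)) \<rho>"

definition jrate :: "('n::finite) cmat \<Rightarrow> 'n cmat \<Rightarrow> complex" where
  "jrate s \<rho> = mtr (s ** \<rho> ** madj s)"

text \<open>h_l(rho) = sigma rho sigma^* / lambda_l(rho)  (Isabelle convention x/0 = 0)\<close>
definition hjump :: "('n::finite) cmat \<Rightarrow> 'n cmat \<Rightarrow> 'n cmat" where
  "hjump s \<rho> = cscale (inverse (jrate s \<rho>)) (s ** \<rho> ** madj s)"

definition Ljump :: "('n::finite) cmat \<Rightarrow> 'n cmat \<Rightarrow> 'n cmat" where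
  "Ljump s \<rho> = s ** \<rho> ** madj s - cscale (jrate s \<rho>) \<rho>"

definition Ltil :: "('n::finite) cmat \<Rightarrow> ('k::finite \<Rightarrow> 'n cmat) \<Rightarrow> (nat \<Rightarrow> 'n cmat) \<Rightarrow> nat
    \<Rightarrow> nat set \<Rightarrow> real^'k \<Rightarrow> 'n cmat \<Rightarrow> 'n cmat" where
  "Ltil H0 Hk \<sigma> L PC u \<rho> = Lind H0 Hk \<sigma> L u \<rho> - (\<Sum>l\<in>PC. Ljump (\<sigma> l) \<rho>)"

text \<open>Infinitesimal generator. For a Hermitian direction X, the terms
  <X, grad w> and <X, Hess w X> are the first and second directional derivatives
  of s |-> w(t, rho + s X) at s = 0.\<close>
definition gen :: "('n::finite) cmat \<Rightarrow> ('k::finite \<Rightarrow> 'n cmat) \<Rightarrow> (nat \<Rightarrow> 'n cmat) \<Rightarrow> nat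
    \<Rightarrow> nat set \<Rightarrow> nat set \<Rightarrow> (real \<times> 'n cmat \<Rightarrow> real) \<Rightarrow> real \<Rightarrow> 'n cmat \<Rightarrow> real^'k \<Rightarrow> real" where
  "gen H0 Hk \<sigma> L HD PC w t \<rho> u =
      deriv (\<lambda>s. w (s, \<rho>)) t
    + deriv (\<lambda>s. w (t, \<rho> + s *\<^sub>R Ltil H0 Hk \<sigma> L PC u \<rho>)) 0
    + (1/2) * (\<Sum>l\<in>HD. deriv (deriv (\<lambda>s. w (t, \<rho> + s *\<^sub>R Gdiff (\<sigma> l) \<rho>))) 0)
    + (\<Sum>l\<in>PC. Re (jrate (\<sigma> l) \<rho>) * (w (t, hjump (\<sigma> l) \<rho>) - w (t, \<rho>)))"

inductive poly_in :: "('a \<Rightarrow> real) set \<Rightarrow> ('a \<Rightarrow> real) \<Rightarrow> bool" for V where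
  const: "poly_in V (\<lambda>x. c)"
| var: "v \<in> V \<Longrightarrow> poly_in V v"
| add: "poly_in V f \<Longrightarrow> poly_in V g \<Longrightarrow> poly_in V (\<lambda>x. f x + g x)"
| mult: "poly_in V f \<Longrightarrow> poly_in V g \<Longrightarrow> poly_in V (\<lambda>x. f x * g x)"

definition vars_t_rho :: "(real \<times> ('n::finite) cmat \<Rightarrow> real) set" where
  "vars_t_rho = {f. f = fst \<or> (\<exists>i j. f = (\<lambda>p. Re (snd p $ i $ j)) \<or> f = (\<lambda>p. Im (snd p $ i $ j)))}"

definition vars_t_rho_u :: "(real \<times> (('n::finite) cmat) \<times> (real^('k::finite)) \<Rightarrow> real) set" where
  "vars_t_rho_u = {f. f = (\<lambda>(t,\<rho>,u). t)
     \<or> (\<exists>i j. f = (\<lambda>(t,\<rho>,u). Re (\<rho> $ i $ j)) \<or> f = (\<lambda>(t,\<rho>,u). Im (\<rho> $ i $ j)))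
     \<or> (\<exists>k. f = (\<lambda>(t,\<rho>,u). u $ k))}"

definition affine_poly :: "(('n::finite) cmat \<Rightarrow> real) \<Rightarrow> bool" where
  "affine_poly f \<longleftrightarrow> (\<exists>c a b. \<forall>\<rho>. f \<rho> = c + (\<Sum>i\<in>UNIV. \<Sum>j\<in>UNIV. a i j * Re (\<rho>$i$j) + b i j * Im (\<rho>$i$j)))"

definition affine_mat_poly :: "(('n::finite) cmat \<Rightarrow> 'n cmat) \<Rightarrow> bool" where
  "affine_mat_poly F \<longleftrightarrow> (\<forall>i j. affine_poly (\<lambda>\<rho>. Re (F \<rho> $ i $ j)) \<and> affine_poly (\<lambda>\<rho>. Im (F \<rho> $ i $ j)))"

end

theory Submission
  imports Defs
begin

lemma poly_in_comp:
  assumes "poly_in V f" "\<And>v. v \<in> V \<Longrightarrow> poly_in W (\<lambda>x. v (g x))"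
  shows "poly_in W (\<lambda>x. f (g x))"
  using assms(1) by induction (auto intro: poly_in.intros assms(2))

lemma poly_in_neg: "poly_in V f \<Longrightarrow> poly_in V (\<lambda>x. - f x)"
  using poly_in.mult[OF poly_in.const[of V "-1"]] by simp

lemma poly_in_diff: "poly_in V f \<Longrightarrow> poly_in V g \<Longrightarrow> poly_in V (\<lambda>x. f x - g x)"
  using poly_in.add[OF _ poly_in_neg] by simp

lemma poly_in_sum:
  assumes "\<And>i. i \<in> A \<Longrightarrow> poly_in V (f i)"
  shows "poly_in V (\<lambda>x. \<Sum>i\<in>A. f i x)"
proof (cases "finite A")
  case True
  then show ?thesis using assms
    by (induction A rule: finite_induct) (auto intro: poly_in.intros)
next
  case False
  then show ?thesis by (simp add: poly_in.const)
qed

definition cpoly :: "('a \<Rightarrow> real) set \<Rightarrow> ('a \<Rightarrow> complex) \<Rightarrow> bool" where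
  "cpoly V f \<longleftrightarrow> poly_in V (\<lambda>x. Re (f x)) \<and> poly_in V (\<lambda>x. Im (f x))"

lemma cpoly_const: "cpoly V (\<lambda>x. c)"
  by (simp add: cpoly_def poly_in.const)

lemma cpoly_add: "cpoly V f \<Longrightarrow> cpoly V g \<Longrightarrow> cpoly V (\<lambda>x. f x + g x)"
  by (simp add: cpoly_def poly_in.add)

lemma cpoly_diff: "cpoly V f \<Longrightarrow> cpoly V g \<Longrightarrow> cpoly V (\<lambda>x. f x - g x)"
  by (simp add: cpoly_def poly_in_diff)

lemma cpoly_mult: "cpoly V f \<Longrightarrow> cpoly V g \<Longrightarrow> cpoly V (\<lambda>x. f x * g x)"
  by (simp add: cpoly_def poly_in_diff poly_in.add poly_in.mult)

lemma cpoly_cnj: "cpoly V f \<Longrightarrow> cpoly V (\<lambda>x. cnj (f x))"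
  by (simp add: cpoly_def poly_in_neg)

lemma cpoly_sum:
  assumes "\<And>i. i \<in> A \<Longrightarrow> cpoly V (f i)"
  shows "cpoly V (\<lambda>x. \<Sum>i\<in>A. f i x)"
  using assms unfolding cpoly_def by (auto simp: Re_sum Im_sum intro!: poly_in_sum)

definition mpoly :: "('a \<Rightarrow> real) set \<Rightarrow> ('a \<Rightarrow> ('n::finite) cmat) \<Rightarrow> bool" where
  "mpoly V M \<longleftrightarrow> (\<forall>i j. cpoly V (\<lambda>x. M x $ i $ j))"

lemma mpoly_const: "mpoly V (\<lambda>x. A)"
  by (simp add: mpoly_def cpoly_const)

lemma mpoly_add: "mpoly V A \<Longrightarrow> mpoly V B \<Longrightarrow> mpoly V (\<lambda>x. A x + B x)"
  by (simp add: mpoly_def cpoly_add)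

lemma mpoly_diff: "mpoly V A \<Longrightarrow> mpoly V B \<Longrightarrow> mpoly V (\<lambda>x. A x - B x)"
  by (simp add: mpoly_def cpoly_diff)

lemma mpoly_mult: "mpoly V A \<Longrightarrow> mpoly V B \<Longrightarrow> mpoly V (\<lambda>x. A x ** B x)"
  unfolding mpoly_def matrix_matrix_mult_def
  by (auto intro!: cpoly_sum cpoly_mult)

lemma mpoly_madj: "mpoly V A \<Longrightarrow> mpoly V (\<lambda>x. madj (A x))"
  unfolding mpoly_def madj_def by (auto intro!: cpoly_cnj)

lemma mpoly_cscale: "cpoly V c \<Longrightarrow> mpoly V A \<Longrightarrow> mpoly V (\<lambda>x. cscale (c x) (A x))"
  unfolding mpoly_def cscale_def by (auto intro!: cpoly_mult)

lemma mpoly_scaleR: "poly_in V r \<Longrightarrow> mpoly V A \<Longrightarrow> mpoly V (\<lambda>x. r x *\<^sub>R A x)"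
  unfolding mpoly_def cpoly_def by (auto intro!: poly_in.mult)

lemma mpoly_sum:
  assumes "\<And>i. i \<in> S \<Longrightarrow> mpoly V (f i)"
  shows "mpoly V (\<lambda>x. \<Sum>i\<in>S. f i x)"
  using assms unfolding mpoly_def by (auto simp: sum_component intro!: cpoly_sum)

lemma cpoly_mtr: "mpoly V A \<Longrightarrow> cpoly V (\<lambda>x. mtr (A x))"
  unfolding mpoly_def mtr_def by (auto intro!: cpoly_sum)

definition liftV :: "('a \<Rightarrow> real) set \<Rightarrow> ('a \<times> real \<Rightarrow> real) set" where
  "liftV V = {\<lambda>p. v (fst p) | v. v \<in> V} \<union> {snd}"

lemma poly_lift: "poly_in V f \<Longrightarrow> poly_in (liftV V) (\<lambda>p. f (fst p))"
  by (erule poly_in_comp) (auto simp: liftV_def intro: poly_in.var)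

lemma poly_snd: "poly_in (liftV V) snd"
  by (rule poly_in.var) (simp add: liftV_def)

lemma mpoly_lift: "mpoly V M \<Longrightarrow> mpoly (liftV V) (\<lambda>p. M (fst p))"
  unfolding mpoly_def cpoly_def by (auto intro: poly_lift)

lemma poly_eval:
  assumes "poly_in (liftV V) g" "poly_in V e"
  shows "poly_in V (\<lambda>a. g (a, e a))"
  using assms(2) by (intro poly_in_comp[OF assms(1), of V "\<lambda>a. (a, e a)", simplified])
    (auto simp: liftV_def intro: poly_in.var)

lemma poly_deriv:
  assumes "poly_in (liftV V) g"
  shows "\<exists>g'. poly_in (liftV V) g' \<and> (\<forall>a s. ((\<lambda>s. g (a,s)) has_real_derivative g' (a,s)) (at s))"
  using assms
proof induction
  case (const c)
  show ?case by (rule exI[of _ "\<lambda>_. 0"]) (auto intro: poly_in.const)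
next
  case (var v)
  then consider w where "v = (\<lambda>p. w (fst p))" | "v = snd" by (auto simp: liftV_def)
  then show ?case
  proof cases
    case 1
    then show ?thesis by (intro exI[of _ "\<lambda>_. 0"]) (auto intro: poly_in.const)
  next
    case 2
    then show ?thesis by (intro exI[of _ "\<lambda>_. 1"]) (auto intro: poly_in.const)
  qed
next
  case (add f g)
  then obtain f' g' where "poly_in (liftV V) f'" "\<forall>a s. ((\<lambda>s. f (a,s)) has_real_derivative f' (a,s)) (at s)"
    "poly_in (liftV V) g'" "\<forall>a s. ((\<lambda>s. g (a,s)) has_real_derivative g' (a,s)) (at s)" by blast
  then show ?case
    by (intro exI[of _ "\<lambda>p. f' p + g' p"]) (auto intro: poly_in.add derivative_intros)
next
  case (mult f g)
  then obtain f' g' where "poly_in (liftV V) f'" "\<forall>a s. ((\<lambda>s. f (a,s)) has_real_derivative f' (a,s)) (at s)"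
    "poly_in (liftV V) g'" "\<forall>a s. ((\<lambda>s. g (a,s)) has_real_derivative g' (a,s)) (at s)" by blast
  then show ?case
    by (intro exI[of _ "\<lambda>p. f' p * g p + g' p * f p"]) (use mult.hyps(1,2) in \<open>auto intro!: poly_in.add poly_in.mult DERIV_mult\<close>)
qed

lemma w_comp:
  assumes "poly_in vars_t_rho w" "poly_in V T" "mpoly V R"
  shows "poly_in V (\<lambda>b. w (T b, R b))"
  using assms(2,3) by (intro poly_in_comp[OF assms(1), of V "\<lambda>b. (T b, R b)", simplified])
    (auto simp: vars_t_rho_def mpoly_def cpoly_def)

abbreviation "WW \<equiv> (vars_t_rho_u :: (real \<times> (('n::finite) cmat) \<times> (real^('k::finite)) \<Rightarrow> real) set)"

lemma var_t: "poly_in (vars_t_rho_u :: (real \<times> (('n::finite) cmat) \<times> (real^('k::finite)) \<Rightarrow> real) set) (\<lambda>b. fst b)"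
  by (rule poly_in.var) (auto simp: vars_t_rho_u_def fun_eq_iff)

lemma var_u: "poly_in (vars_t_rho_u :: (real \<times> (('n::finite) cmat) \<times> (real^('k::finite)) \<Rightarrow> real) set) (\<lambda>b. snd (snd b) $ k)"
  by (rule poly_in.var) (auto simp: vars_t_rho_u_def fun_eq_iff)

lemma var_rho: "mpoly (vars_t_rho_u :: (real \<times> (('n::finite) cmat) \<times> (real^('k::finite)) \<Rightarrow> real) set) (\<lambda>b. fst (snd b))"
  unfolding mpoly_def cpoly_def
proof (intro allI conjI)
  fix i j
  show "poly_in (vars_t_rho_u :: (real \<times> (('n::finite) cmat) \<times> (real^('k::finite)) \<Rightarrow> real) set) (\<lambda>b. Re (fst (snd b) $ i $ j))"
    by (rule poly_in.var) (auto simp: vars_t_rho_u_def fun_eq_iff)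
  show "poly_in (vars_t_rho_u :: (real \<times> (('n::finite) cmat) \<times> (real^('k::finite)) \<Rightarrow> real) set) (\<lambda>b. Im (fst (snd b) $ i $ j))"
    by (rule poly_in.var) (auto simp: vars_t_rho_u_def fun_eq_iff)
qed

lemma poly_t_deriv:
  fixes w :: "real \<times> ('n::finite) cmat \<Rightarrow> real"
  assumes "poly_in vars_t_rho w"
  shows "\<exists>P. poly_in (vars_t_rho_u :: (real \<times> ('n cmat) \<times> (real^('k::finite)) \<Rightarrow> real) set) P \<and>
     (\<forall>b. deriv (\<lambda>s. w (s, fst (snd b))) (fst b) = P b)"
proof -
  have "poly_in (liftV (vars_t_rho_u :: (real \<times> ('n cmat) \<times> (real^('k::finite)) \<Rightarrow> real) set))
     (\<lambda>p. w (snd p, fst (snd (fst p))))"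
    by (intro w_comp[OF assms] poly_snd mpoly_lift[OF var_rho])
  from poly_deriv[OF this] obtain g' where g': "poly_in (liftV (vars_t_rho_u :: (real \<times> ('n cmat) \<times> (real^('k::finite)) \<Rightarrow> real) set)) g'"
    "\<forall>a s. ((\<lambda>s. w (s, fst (snd a))) has_real_derivative g' (a, s)) (at s)" by auto
  show ?thesis
    by (rule exI[of _ "\<lambda>b. g' (b, fst b)"]) (use g' in \<open>auto intro: poly_eval var_t DERIV_imp_deriv\<close>)
qed

lemma dir_deriv:
  fixes w :: "real \<times> ('n::finite) cmat \<Rightarrow> real"
    and X :: "real \<times> 'n cmat \<times> (real^('k::finite)) \<Rightarrow> 'n cmat"
  assumes "poly_in vars_t_rho w" "mpoly (vars_t_rho_u :: (real \<times> ('n cmat) \<times> (real^'k) \<Rightarrow> real) set) X"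
  shows "\<exists>P1 P2. poly_in (vars_t_rho_u :: (real \<times> ('n cmat) \<times> (real^'k) \<Rightarrow> real) set) P1
     \<and> poly_in (vars_t_rho_u :: (real \<times> ('n cmat) \<times> (real^'k) \<Rightarrow> real) set) P2
     \<and> (\<forall>b. deriv (\<lambda>s. w (fst b, fst (snd b) + s *\<^sub>R X b)) 0 = P1 b
           \<and> deriv (deriv (\<lambda>s. w (fst b, fst (snd b) + s *\<^sub>R X b))) 0 = P2 b)"
proof -
  let ?V = "liftV (vars_t_rho_u :: (real \<times> ('n cmat) \<times> (real^'k) \<Rightarrow> real) set)"
  have "poly_in ?V (\<lambda>p. w (fst (fst p), fst (snd (fst p)) + snd p *\<^sub>R X (fst p)))"
    by (intro w_comp[OF assms(1)] poly_lift[OF var_t] mpoly_add mpoly_lift[OF var_rho]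
          mpoly_scaleR poly_snd mpoly_lift[OF assms(2)])
  from poly_deriv[OF this] obtain g' where g': "poly_in ?V g'"
    "\<forall>a s. ((\<lambda>s. w (fst a, fst (snd a) + s *\<^sub>R X a)) has_real_derivative g' (a, s)) (at s)" by auto
  from poly_deriv[OF g'(1)] obtain g'' where g'': "poly_in ?V g''"
    "\<forall>a s. ((\<lambda>s. g' (a, s)) has_real_derivative g'' (a, s)) (at s)" by auto
  have d1: "deriv (\<lambda>s. w (fst b, fst (snd b) + s *\<^sub>R X b)) = (\<lambda>s. g' (b, s))" for b
    by (intro ext DERIV_imp_deriv g'(2)[rule_format])
  show ?thesis
    apply (rule exI[of _ "\<lambda>b. g' (b, 0)"], rule exI[of _ "\<lambda>b. g'' (b, 0)"])
    apply (intro conjI allI)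
       apply (rule poly_eval[OF g'(1) poly_in.const])
      apply (rule poly_eval[OF g''(1) poly_in.const])
     apply (simp add: d1)
    apply (simp add: d1)
    by (intro DERIV_imp_deriv g''(2)[rule_format])
qed

lemma affine_poly_in:
  assumes "affine_poly f"
  shows "poly_in (vars_t_rho_u :: (real \<times> (('n::finite) cmat) \<times> (real^('k::finite)) \<Rightarrow> real) set) (\<lambda>b. f (fst (snd b)))"
proof -
  obtain c a bb where e: "\<forall>\<rho>. f \<rho> = c + (\<Sum>i\<in>UNIV. \<Sum>j\<in>UNIV. a i j * Re (\<rho>$i$j) + bb i j * Im (\<rho>$i$j))"
    using assms unfolding affine_poly_def by blast
  have "poly_in (vars_t_rho_u :: (real \<times> (('n::finite) cmat) \<times> (real^('k::finite)) \<Rightarrow> real) set)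
     (\<lambda>b. c + (\<Sum>i\<in>UNIV. \<Sum>j\<in>UNIV. a i j * Re (fst (snd b)$i$j) + bb i j * Im (fst (snd b)$i$j)))"
    using var_rho unfolding mpoly_def cpoly_def
    by (auto intro!: poly_in.add poly_in.mult poly_in.const poly_in_sum)
  then show ?thesis using e by simp
qed

theorem lemma3:
  fixes H0 :: "complex^'n::finite^'n" and Hk :: "'k::finite \<Rightarrow> complex^'n^'n"
    and \<sigma> :: "nat \<Rightarrow> complex^'n^'n" and L :: nat and HD PC :: "nat set"
    and w :: "real \<times> (complex^'n^'n) \<Rightarrow> real"
  assumes "hermitian H0" and "\<forall>k. hermitian (Hk k)"
    and "HD \<union> PC = {1..L}" and "HD \<inter> PC = {}"
    and "\<forall>l\<in>PC. \<exists>F. affine_mat_poly F \<and>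
           (\<forall>\<rho>. hermitian \<rho> \<and> jrate (\<sigma> l) \<rho> \<noteq> 0 \<longrightarrow> hjump (\<sigma> l) \<rho> = F \<rho>)"
    and "poly_in vars_t_rho w"
  shows "\<exists>P. poly_in (vars_t_rho_u :: (real \<times> (complex^'n^'n) \<times> (real^'k) \<Rightarrow> real) set) P \<and>
           (\<forall>t \<rho> u. hermitian \<rho> \<longrightarrow> gen H0 Hk \<sigma> L HD PC w t \<rho> u = P (t, \<rho>, u))"
proof -
  let ?W = "vars_t_rho_u :: (real \<times> (complex^'n^'n) \<times> (real^'k) \<Rightarrow> real) set"
  note cl = mpoly_add mpoly_diff mpoly_mult mpoly_madj mpoly_cscale mpoly_scaleR mpoly_sum mpoly_const
    cpoly_mtr cpoly_const var_rho var_u var_t poly_in.const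
  obtain F where F: "\<forall>l\<in>PC. affine_mat_poly (F l) \<and>
           (\<forall>\<rho>. hermitian \<rho> \<and> jrate (\<sigma> l) \<rho> \<noteq> 0 \<longrightarrow> hjump (\<sigma> l) \<rho> = F l \<rho>)"
    using bchoice[OF assms(5)] by blast
  obtain P0 where P0: "poly_in ?W P0" "\<forall>b. deriv (\<lambda>s. w (s, fst (snd b))) (fst b) = P0 b"
    using poly_t_deriv[OF assms(6)] by blast
  have XL: "mpoly ?W (\<lambda>b. Ltil H0 Hk \<sigma> L PC (snd (snd b)) (fst (snd b)))"
    unfolding Ltil_def Lind_def Ljump_def Ham_def mcomm_def macomm_def jrate_def
    by (intro cl)
  obtain P1 P1' where P1: "poly_in ?W P1"
    "\<forall>b. deriv (\<lambda>s. w (fst b, fst (snd b) + s *\<^sub>R Ltil H0 Hk \<sigma> L PC (snd (snd b)) (fst (snd b)))) 0 = P1 b"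
    using dir_deriv[OF assms(6) XL] by blast
  have "\<forall>l\<in>HD. \<exists>Q. poly_in ?W Q \<and> (\<forall>b. deriv (deriv (\<lambda>s. w (fst b, fst (snd b) + s *\<^sub>R Gdiff (\<sigma> l) (fst (snd b))))) 0 = Q b)"
  proof
    fix l
    have "mpoly ?W (\<lambda>b. Gdiff (\<sigma> l) (fst (snd b)))"
      unfolding Gdiff_def by (intro cl)
    from dir_deriv[OF assms(6) this] show "\<exists>Q. poly_in ?W Q \<and> (\<forall>b. deriv (deriv (\<lambda>s. w (fst b, fst (snd b) + s *\<^sub>R Gdiff (\<sigma> l) (fst (snd b))))) 0 = Q b)"
      by blast
  qed
  then obtain Q where Q: "\<forall>l\<in>HD. poly_in ?W (Q l) \<and> (\<forall>b. deriv (deriv (\<lambda>s. w (fst b, fst (snd b) + s *\<^sub>R Gdiff (\<sigma> l) (fst (snd b))))) 0 = Q l b)"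
    by metis
  define R :: "nat \<Rightarrow> real \<times> (complex^'n^'n) \<times> (real^'k) \<Rightarrow> real" where "R l b = Re (jrate (\<sigma> l) (fst (snd b))) * (w (fst b, F l (fst (snd b))) - w (fst b, fst (snd b)))" for l b
  have R: "poly_in ?W (R l)" if "l \<in> PC" for l
  proof -
    have "cpoly ?W (\<lambda>b. jrate (\<sigma> l) (fst (snd b)))"
      unfolding jrate_def by (intro cl)
    moreover have "mpoly ?W (\<lambda>b. F l (fst (snd b)))"
      using F that unfolding affine_mat_poly_def mpoly_def cpoly_def
      by (auto intro: affine_poly_in)
    ultimately show ?thesis unfolding R_def cpoly_def
      by (intro poly_in.mult poly_in_diff w_comp[OF assms(6)] var_t var_rho) auto
  qed
  show ?thesis
  proof (rule exI[of _ "\<lambda>b. P0 b + P1 b + (1/2) * (\<Sum>l\<in>HD. Q l b) + (\<Sum>l\<in>PC. R l b)"], intro conjI allI impI)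
    show "poly_in ?W (\<lambda>b. P0 b + P1 b + (1/2) * (\<Sum>l\<in>HD. Q l b) + (\<Sum>l\<in>PC. R l b))"
      using P0 P1 Q R by (intro poly_in.add poly_in.mult poly_in.const poly_in_sum) auto
  next
    fix t \<rho> u assume h: "hermitian (\<rho>::complex^'n^'n)"
    have pc: "(\<Sum>l\<in>PC. Re (jrate (\<sigma> l) \<rho>) * (w (t, hjump (\<sigma> l) \<rho>) - w (t, \<rho>)))
       = (\<Sum>l\<in>PC. R l (t, \<rho>, u))"
    proof (rule sum.cong)
      fix l assume l: "l \<in> PC"
      show "Re (jrate (\<sigma> l) \<rho>) * (w (t, hjump (\<sigma> l) \<rho>) - w (t, \<rho>)) = R l (t, \<rho>, u)"
      proof (cases "jrate (\<sigma> l) \<rho> = 0")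
        case True then show ?thesis by (simp add: R_def)
      next
        case False then show ?thesis using F l h by (simp add: R_def)
      qed
    qed simp
    have hd: "(\<Sum>l\<in>HD. deriv (deriv (\<lambda>s. w (t, \<rho> + s *\<^sub>R Gdiff (\<sigma> l) \<rho>))) 0) = (\<Sum>l\<in>HD. Q l (t, \<rho>, u))"
      using Q by (intro sum.cong) (auto dest: spec[of _ "(t, \<rho>, u)"])
    show "gen H0 Hk \<sigma> L HD PC w t \<rho> u = P0 (t, \<rho>, u) + P1 (t, \<rho>, u) + (1/2) * (\<Sum>l\<in>HD. Q l (t, \<rho>, u)) + (\<Sum>l\<in>PC. R l (t, \<rho>, u))"
      unfolding gen_def pc hd using P0(2)[rule_format, of "(t, \<rho>, u)"] P1(2)[rule_format, of "(t, \<rho>, u)"]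
      by simp
  qed
qed

end
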